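(* Let $L>0$, $\sigma$, $s$ be such that $Q_\sigma(L,s)>0$, and let $Y$ be the solution of the discrete Riemann--Hilbert problem described in the context. Fix $a\in\mathbb{Z}'$, let $C_Y(a),Y_1(a),\widetilde C_Y(a)$ be as in the Laurent expansions described in the context, and let $c_Y(a):=\det C_Y(a)$. Then \[ \frac{\mathbf g(a)^\top Y_1(a)\mathbf f(a)}{1-M_s(a,a)}=\frac{c_Y(a)-1}{c_Y(a)}, \] and there exists $d_Y(a)\in\mathbb{C}$ such that $\widetilde C_Y(a)C_Y(a)=c_Y(a)I+d_Y(a)W_Y(a)$.
   Context: $\mathbb{Z}'=\mathbb{Z}+\tfrac12$, $\mathbb{Z}'_+=\mathbb{Z}'\cap(0,\infty)$; $\mathrm{J}_k$ is the Bessel function of the first kind; $L>0$; $\sigma:\mathbb{Z}'\to[0,1]$ with $\sum_{l<0}\sigma(l)<\infty$; $Q_\sigma(L,s)=\det(1-P_s\mathcal K_\sigma P_s)$ where $\mathcal K_\sigma$ is the operator on $\ell^2(\mathbb{Z}')$ with kernel $K_\sigma(a,b)=\sum_{l\in\mathbb{Z}'}\sigma(l)\mathrm{J}_{a+l}(2L)\mathrm{J}_{b+l}(2L)$ and $P_s$ is the orthogonal projection onto $\ell^2(\{s+1,s+2,\dots\})$. Let $K^{\mathsf{Be}}(a,a)=\sum_{l\in\mathbb{Z}'_+}\mathrm{J}_{a+l}(2L)^2$, $M_s(a,a)=\sigma(a-s-\tfrac12)K^{\mathsf{Be}}(a,a)$ (one has $M_s(a,a)<1$), $\mathbf f(a)=\sqrt{\sigma(a-s-\tfrac12)}\,(\mathrm{J}_{a-\frac12}(2L),\,L\mathrm{J}_{a+\frac12}(2L))^\top$,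 $\mathbf g(a)=\sqrt{\sigma(a-s-\tfrac12)}\,(L\mathrm{J}_{a+\frac12}(2L),\,-\mathrm{J}_{a-\frac12}(2L))^\top$, and $W_Y(a)=\mathbf f(a)\mathbf g(a)^\top/(1-M_s(a,a))$. Discrete RH problem: $Y(z)$ is a $2\times2$ matrix-valued meromorphic function with simple poles only at points of $\mathbb{Z}'$; for every $a\in\mathbb{Z}'$, $Y(z)\bigl(I-\frac{W_Y(a)}{z-a}\bigr)$ has a removable singularity at $z=a$; and $\sup_{|z|=n}|Y(z)-I|\to0$ as $n\to+\infty$ through integers. When $Q_\sigma(L,s)>0$ it has a unique solution, with $\det Y\equiv1$. Near each $a\in\mathbb{Z}'$ one has Laurent expansions $Y(z)=C_Y(a)\bigl(\frac{W_Y(a)}{z-a}+I+Y_1(a)(z-a)+O((z-a)^2)\bigr)$ and $Y^{-1}(z)=\bigl(-\frac{W_Y(a)}{z-a}+I+\widetilde Y_1(a)(z-a)+O((z-a)^2)\bigr)\widetilde C_Y(a)$ with $C_Y(a),\widetilde C_Y(a)$ invertible matrices. *)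

theory Defs
  imports "HOL-Analysis.Analysis"
begin

definition Zp :: "real set" where
  "Zp = {x. \<exists>k::int. x = of_int k + 1/2}"

text \<open>Bessel function of the first kind of real order nu, at x > 0
  (series with the entire reciprocal Gamma function, so integer negative orders are covered).\<close>
definition besselJ :: "real \<Rightarrow> real \<Rightarrow> real" where
  "besselJ nu x = (\<Sum>m. (-1)^m * rGamma (real m + nu + 1) / fact m * (x/2) powr (2 * real m + nu))"

definition Ksigma :: "(real \<Rightarrow> real) \<Rightarrow> real \<Rightarrow> real \<Rightarrow> real \<Rightarrow> real" where
  "Ksigma \<sigma> L a b = (\<Sum>\<^sub>\<infinity>l\<in>Zp. \<sigma> l * besselJ (a + l) (2*L) * besselJ (b + l) (2*L))"

text \<open>Fredholm determinant det(1 - K) of an operator with kernel K on l^2(A) (Fredholm series).\<close>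
definition fredholm_det :: "(real \<Rightarrow> real \<Rightarrow> real) \<Rightarrow> real set \<Rightarrow> real" where
  "fredholm_det K A = (\<Sum>n. (-1)^n / fact n *
     (\<Sum>\<^sub>\<infinity>xs\<in>{xs. length xs = n \<and> set xs \<subseteq> A}.
        (\<Sum>p | p permutes {..<n}. of_int (sign p) * (\<Prod>i<n. K (xs!i) (xs!(p i))))))"

definition Qsigma :: "(real \<Rightarrow> real) \<Rightarrow> real \<Rightarrow> real \<Rightarrow> real" where
  "Qsigma \<sigma> L s = fredholm_det (Ksigma \<sigma> L) {x \<in> Zp. s + 1 \<le> x}"

definition KBe :: "real \<Rightarrow> real \<Rightarrow> real" where
  "KBe L a = (\<Sum>\<^sub>\<infinity>l\<in>{l\<in>Zp. 0 < l}. (besselJ (a + l) (2*L))^2)"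

definition Ms :: "(real \<Rightarrow> real) \<Rightarrow> real \<Rightarrow> real \<Rightarrow> real \<Rightarrow> real" where
  "Ms \<sigma> L s a = \<sigma> (a - s - 1/2) * KBe L a"

definition fvec :: "(real \<Rightarrow> real) \<Rightarrow> real \<Rightarrow> real \<Rightarrow> real \<Rightarrow> complex^2" where
  "fvec \<sigma> L s a = vector
     [complex_of_real (sqrt (\<sigma> (a - s - 1/2)) * besselJ (a - 1/2) (2*L)),
      complex_of_real (sqrt (\<sigma> (a - s - 1/2)) * (L * besselJ (a + 1/2) (2*L)))]"

definition gvec :: "(real \<Rightarrow> real) \<Rightarrow> real \<Rightarrow> real \<Rightarrow> real \<Rightarrow> complex^2" where
  "gvec \<sigma> L s a = vector
     [complex_of_real (sqrt (\<sigma> (a - s - 1/2)) * (L * besselJ (a + 1/2) (2*L))),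
      complex_of_real (sqrt (\<sigma> (a - s - 1/2)) * (- besselJ (a - 1/2) (2*L)))]"

definition cscale :: "complex \<Rightarrow> complex^2^2 \<Rightarrow> complex^2^2" where
  "cscale c M = (\<chi> i j. c * M$i$j)"

definition WY :: "(real \<Rightarrow> real) \<Rightarrow> real \<Rightarrow> real \<Rightarrow> real \<Rightarrow> complex^2^2" where
  "WY \<sigma> L s a = (\<chi> i j. (fvec \<sigma> L s a)$i * (gvec \<sigma> L s a)$j / complex_of_real (1 - Ms \<sigma> L s a))"

definition dRHP :: "(real \<Rightarrow> real) \<Rightarrow> real \<Rightarrow> real \<Rightarrow> (complex \<Rightarrow> complex^2^2) \<Rightarrow> bool" where
  "dRHP \<sigma> L s Y \<longleftrightarrow>
     (\<forall>i j. (\<lambda>z. Y z $ i $ j) holomorphic_on (- (complex_of_real ` Zp))) \<and>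
     (\<forall>a\<in>Zp. \<forall>i j. \<exists>c. ((\<lambda>z. (z - complex_of_real a) * Y z $ i $ j) \<longlongrightarrow> c) (at (complex_of_real a))) \<and>
     (\<forall>a\<in>Zp. \<forall>i j. \<exists>c. ((\<lambda>z. (Y z ** (mat 1 - cscale (1 / (z - complex_of_real a)) (WY \<sigma> L s a))) $ i $ j)
                          \<longlongrightarrow> c) (at (complex_of_real a))) \<and>
     ((\<lambda>n::nat. SUP z\<in>sphere 0 (real n). norm (Y z - mat 1)) \<longlonglongrightarrow> 0)"

end

theory Submission imports Defs "HOL-Complex_Analysis.Conformal_Mappings" begin

lemma mat2_eq: "(A::'a^2^2) = B \<longleftrightarrow> A$1$1 = B$1$1 \<and> A$1$2 = B$1$2 \<and> A$2$1 = B$2$1 \<and> A$2$2 = B$2$2"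
  by (auto simp: vec_eq_iff forall_2)

lemma mult2: "((A::'a::semiring_1^2^2) ** B)$i$j = A$i$1*B$1$j + A$i$2*B$2$j"
  by (simp add: matrix_matrix_mult_def sum_2)

lemma mat1_2: "(mat 1::'a::zero_neq_one^2^2)$1$1 = 1" "(mat 1::'a::zero_neq_one^2^2)$2$2 = 1"
   "(mat 1::'a::zero_neq_one^2^2)$1$2 = 0" "(mat 1::'a::zero_neq_one^2^2)$2$1 = 0"
  by (simp_all add: mat_def)

lemma cscale_nth[simp]: "cscale c M $ i $ j = c * M$i$j"
  by (simp add: cscale_def)

lemma ev_nz: "eventually (\<lambda>t. t \<noteq> 0) (at (0::complex))"
  by (simp add: eventually_at_filter)

lemma coeff_lemma:
  fixes p0 p1 p2 p3 p4 r :: complex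
  assumes lim: "((\<lambda>t. (p0 + p1*t + p2*t^2 + p3*t^3 + p4*t^4) / t^2) \<longlongrightarrow> r) (at 0)"
  shows "p0 = 0 \<and> p1 = 0 \<and> p2 = r"
proof -
  let ?f = "\<lambda>t. (p0 + p1*t + p2*t^2 + p3*t^3 + p4*t^4) / t^2"
  have id: "((\<lambda>t::complex. t) \<longlongrightarrow> 0) (at 0)" by (rule tendsto_ident_at)
  have A: "((\<lambda>t. ?f t * t^2) \<longlongrightarrow> r * 0^2) (at 0)"
    by (intro tendsto_intros lim id)
  have "((\<lambda>t. p0 + p1*t + p2*t^2 + p3*t^3 + p4*t^4) \<longlongrightarrow> p0 + p1*0 + p2*0^2 + p3*0^3 + p4*0^4) (at 0)"
    by (intro tendsto_intros id)
  then have X: "((\<lambda>t. p0 + p1*t + p2*t^2 + p3*t^3 + p4*t^4) \<longlongrightarrow> p0) (at 0)" by simp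
  have E: "eventually (\<lambda>t. p0 + p1*t + p2*t^2 + p3*t^3 + p4*t^4 = ?f t * t^2) (at 0)"
    using ev_nz by eventually_elim simp
  have B: "((\<lambda>t. ?f t * t^2) \<longlongrightarrow> p0) (at 0)" by (rule Lim_transform_eventually[OF X E])
  have p0: "p0 = 0" using tendsto_unique[OF at_neq_bot B A] by simp
  have A: "((\<lambda>t. ?f t * t) \<longlongrightarrow> r * 0) (at 0)"
    by (intro tendsto_intros lim id)
  have "((\<lambda>t. p1 + p2*t + p3*t^2 + p4*t^3) \<longlongrightarrow> p1 + p2*0 + p3*0^2 + p4*0^3) (at 0)"
    by (intro tendsto_intros id)
  then have X: "((\<lambda>t. p1 + p2*t + p3*t^2 + p4*t^3) \<longlongrightarrow> p1) (at 0)" by simp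
  have E: "eventually (\<lambda>t. p1 + p2*t + p3*t^2 + p4*t^3 = ?f t * t) (at 0)"
    using ev_nz by eventually_elim (simp add: p0 eval_nat_numeral field_simps)
  have B: "((\<lambda>t. ?f t * t) \<longlongrightarrow> p1) (at 0)" by (rule Lim_transform_eventually[OF X E])
  have p1: "p1 = 0" using tendsto_unique[OF at_neq_bot B A] by simp
  have "((\<lambda>t. p2 + p3*t + p4*t^2) \<longlongrightarrow> p2 + p3*0 + p4*0^2) (at 0)"
    by (intro tendsto_intros id)
  then have X: "((\<lambda>t. p2 + p3*t + p4*t^2) \<longlongrightarrow> p2) (at 0)" by simp
  have E: "eventually (\<lambda>t. p2 + p3*t + p4*t^2 = ?f t) (at 0)"
    using ev_nz by eventually_elim (simp add: p0 p1 eval_nat_numeral field_simps)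
  have B: "(?f \<longlongrightarrow> p2) (at 0)" by (rule Lim_transform_eventually[OF X E])
  have "p2 = r" using tendsto_unique[OF at_neq_bot B lim] by simp
  with p0 p1 show ?thesis by simp
qed


lemma small_div:
  fixes F :: "complex \<Rightarrow> complex^2^2"
  assumes bnd: "eventually (\<lambda>t. norm (F t) \<le> B * norm t^2) (at 0)"
  shows "((\<lambda>t. F t $i$j / t) \<longlongrightarrow> 0) (at 0)"
proof (rule Lim_null_comparison)
  show "eventually (\<lambda>t. norm (F t $i$j / t) \<le> B * norm t) (at 0)"
    using bnd ev_nz
  proof eventually_elim
    case (elim t)
    have "norm (F t $i$j) \<le> norm (F t)"
      using Finite_Cartesian_Product.norm_nth_le[of "F t $ i" j] Finite_Cartesian_Product.norm_nth_le[of "F t" i] by linarith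
    also have "\<dots> \<le> B * norm t * norm t" using elim by (simp add: power2_eq_square mult.assoc)
    finally show ?case using elim by (simp add: norm_divide divide_le_eq)
  qed
  have "((\<lambda>t::complex. B * norm t) \<longlongrightarrow> B * norm (0::complex)) (at 0)"
    by (intro tendsto_intros tendsto_ident_at)
  then show "((\<lambda>t::complex. B * norm t) \<longlongrightarrow> 0) (at 0)" by simp
qed

lemma small_lim:
  fixes F :: "complex \<Rightarrow> complex^2^2"
  assumes bnd: "eventually (\<lambda>t. norm (F t) \<le> B * norm t^2) (at 0)"
  shows "((\<lambda>t. F t $i$j) \<longlongrightarrow> 0) (at 0)"
proof -
  have "((\<lambda>t. t * (F t $i$j / t)) \<longlongrightarrow> 0 * 0) (at 0)"
    by (intro tendsto_intros small_div[OF bnd] tendsto_ident_at)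
  moreover have "eventually (\<lambda>t. t * (F t $i$j / t) = F t $i$j) (at 0)"
    using ev_nz by eventually_elim simp
  ultimately show ?thesis using Lim_transform_eventually by fastforce
qed

lemma det_limit_generic:
  fixes Yf X :: "complex \<Rightarrow> complex^2^2"
  assumes d1: "eventually (\<lambda>t. det (Yf t) = 1) (at 0)"
    and bnd: "eventually (\<lambda>t. norm (Yf t - X t) \<le> B * norm t^2) (at 0)"
    and lim: "\<And>i j. ((\<lambda>t. t * X t $i$j) \<longlongrightarrow> L i j) (at 0)"
  shows "((\<lambda>t. det (X t)) \<longlongrightarrow> 1) (at 0)"
proof -
  define F where "F t = Yf t - X t" for t
  have bF: "eventually (\<lambda>t. norm (F t) \<le> B * norm t^2) (at 0)" using bnd by (simp add: F_def)
  define R where "R t = (t * X t$1$1) * (F t$2$2 / t) + (F t$1$1 / t) * (t * X t$2$2)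
     - (t * X t$1$2) * (F t$2$1 / t) - (F t$1$2 / t) * (t * X t$2$1)
     + (F t$1$1 * F t$2$2 - F t$1$2 * F t$2$1)" for t
  have "(R \<longlongrightarrow> L 1 1 * 0 + 0 * L 2 2 - L 1 2 * 0 - 0 * L 2 1 + (0 * 0 - 0 * 0)) (at 0)"
    unfolding R_def by (intro tendsto_intros lim small_div[OF bF] small_lim[OF bF])
  then have R0: "(R \<longlongrightarrow> 0) (at 0)" by simp
  have A: "((\<lambda>t. det (Yf t)) \<longlongrightarrow> 1) (at 0)"
    by (rule tendsto_eventually) (use d1 in \<open>auto elim: eventually_mono\<close>)
  have "((\<lambda>t. det (Yf t) - R t) \<longlongrightarrow> 1 - 0) (at 0)"
    by (rule tendsto_diff[OF A R0])
  moreover have "eventually (\<lambda>t. det (Yf t) - R t = det (X t)) (at 0)"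
    using ev_nz
  proof eventually_elim
    case (elim t)
    have Y: "Yf t = X t + F t" by (simp add: F_def)
    show ?case unfolding Y R_def det_2 using elim
      by (simp add: field_simps)
  qed
  ultimately show ?thesis using Lim_transform_eventually by fastforce
qed

lemma prod_limit_generic:
  fixes V Yf U X :: "complex \<Rightarrow> complex^2^2"
  assumes e1: "eventually (\<lambda>t. V t ** Yf t = mat 1) (at 0)"
    and b1: "eventually (\<lambda>t. norm (V t - U t) \<le> B1 * norm t^2) (at 0)"
    and b2: "eventually (\<lambda>t. norm (Yf t - X t) \<le> B2 * norm t^2) (at 0)"
    and limX: "\<And>i j. ((\<lambda>t. t * X t $i$j) \<longlongrightarrow> LX i j) (at 0)"
    and limU: "\<And>i j. ((\<lambda>t. t * U t $i$j) \<longlongrightarrow> LU i j) (at 0)"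
  shows "((\<lambda>t. (U t ** X t)$i$j) \<longlongrightarrow> (mat 1::complex^2^2)$i$j) (at 0)"
proof -
  define F where "F t = Yf t - X t" for t
  define G where "G t = V t - U t" for t
  have bF: "eventually (\<lambda>t. norm (F t) \<le> B2 * norm t^2) (at 0)" using b2 by (simp add: F_def)
  have bG: "eventually (\<lambda>t. norm (G t) \<le> B1 * norm t^2) (at 0)" using b1 by (simp add: G_def)
  define R where "R t = (t * U t$i$1) * (F t$1$j / t) + (t * U t$i$2) * (F t$2$j / t)
     + (G t$i$1 / t) * (t * X t$1$j) + (G t$i$2 / t) * (t * X t$2$j)
     + G t$i$1 * F t$1$j + G t$i$2 * F t$2$j" for t
  have "(R \<longlongrightarrow> LU i 1 * 0 + LU i 2 * 0 + 0 * LX 1 j + 0 * LX 2 j + 0 * 0 + 0 * 0) (at 0)"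
    unfolding R_def by (intro tendsto_intros limX limU small_div[OF bF] small_lim[OF bF]
        small_div[OF bG] small_lim[OF bG])
  then have R0: "(R \<longlongrightarrow> 0) (at 0)" by simp
  have A: "((\<lambda>t. (V t ** Yf t)$i$j) \<longlongrightarrow> (mat 1::complex^2^2)$i$j) (at 0)"
    by (rule tendsto_eventually) (use e1 in \<open>auto elim: eventually_mono\<close>)
  have "((\<lambda>t. (V t ** Yf t)$i$j - R t) \<longlongrightarrow> (mat 1::complex^2^2)$i$j - 0) (at 0)"
    by (rule tendsto_diff[OF A R0])
  moreover have "eventually (\<lambda>t. (V t ** Yf t)$i$j - R t = (U t ** X t)$i$j) (at 0)"
    using ev_nz
  proof eventually_elim
    case (elim t)
    have Y: "Yf t = X t + F t" by (simp add: F_def)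
    have V: "V t = U t + G t" by (simp add: G_def)
    show ?case unfolding Y V R_def mult2 using elim
      by (simp add: field_simps)
  qed
  ultimately show ?thesis using Lim_transform_eventually by fastforce
qed


lemma tlim_left:
  fixes C W Y :: "complex^2^2"
  shows "((\<lambda>t. t * (C ** (cscale (1/t) W + mat 1 + cscale t Y))$i$j) \<longlongrightarrow> (C ** W)$i$j) (at 0)"
proof -
  let ?g = "\<lambda>t. C$i$1 * (W$1$j + t * (mat 1::complex^2^2)$1$j + t*t*Y$1$j) + C$i$2 * (W$2$j + t * (mat 1::complex^2^2)$2$j + t*t*Y$2$j)"
  have "(?g \<longlongrightarrow> ?g 0) (at 0)" by (intro tendsto_intros tendsto_ident_at)
  then have A: "(?g \<longlongrightarrow> (C ** W)$i$j) (at 0)" by (simp add: mult2)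
  have "eventually (\<lambda>t. ?g t = t * (C ** (cscale (1/t) W + mat 1 + cscale t Y))$i$j) (at 0)"
    using ev_nz by eventually_elim (simp add: mult2 field_simps)
  then show ?thesis using A Lim_transform_eventually by fastforce
qed

lemma tlim_right:
  fixes C W Y :: "complex^2^2"
  shows "((\<lambda>t. t * ((cscale (1/t) W + mat 1 + cscale t Y) ** C)$i$j) \<longlongrightarrow> (W ** C)$i$j) (at 0)"
proof -
  let ?g = "\<lambda>t. (W$i$1 + t * (mat 1::complex^2^2)$i$1 + t*t*Y$i$1) * C$1$j + (W$i$2 + t * (mat 1::complex^2^2)$i$2 + t*t*Y$i$2) * C$2$j"
  have "(?g \<longlongrightarrow> ?g 0) (at 0)" by (intro tendsto_intros tendsto_ident_at)
  then have A: "(?g \<longlongrightarrow> (W ** C)$i$j) (at 0)" by (simp add: mult2)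
  have "eventually (\<lambda>t. ?g t = t * ((cscale (1/t) W + mat 1 + cscale t Y) ** C)$i$j) (at 0)"
    using ev_nz by eventually_elim (simp add: mult2 field_simps)
  then show ?thesis using A Lim_transform_eventually by fastforce
qed

lemma detM:
  fixes W Y :: "complex^2^2"
  assumes "t \<noteq> 0"
  shows "det (cscale (1/t) W + mat 1 + cscale t Y) =
    ((W$1$1*W$2$2 - W$1$2*W$2$1) + (W$1$1 + W$2$2)*t
     + (1 + W$1$1*Y$2$2 + W$2$2*Y$1$1 - W$1$2*Y$2$1 - W$2$1*Y$1$2)*t^2
     + (Y$1$1 + Y$2$2)*t^3 + (Y$1$1*Y$2$2 - Y$1$2*Y$2$1)*t^4) / t^2"
  using assms by (simp add: det_2 mat1_2 field_simps eval_nat_numeral)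

lemma prodM:
  fixes V Z P W Y :: "complex^2^2"
  assumes "t \<noteq> 0"
  shows "((cscale (1/t) V + mat 1 + cscale t Z) ** P ** (cscale (1/t) W + mat 1 + cscale t Y))$i$j =
    ((V**P**W)$i$j + (V**P + P**W)$i$j * t + (V**P**Y + P + Z**P**W)$i$j * t^2
     + (P**Y + Z**P)$i$j * t^3 + (Z**P**Y)$i$j * t^4) / t^2"
proof -
  have "\<forall>i j. ((cscale (1/t) V + mat 1 + cscale t Z) ** P ** (cscale (1/t) W + mat 1 + cscale t Y))$i$j =
    ((V**P**W)$i$j + (V**P + P**W)$i$j * t + (V**P**Y + P + Z**P**W)$i$j * t^2
     + (P**Y + Z**P)$i$j * t^3 + (Z**P**Y)$i$j * t^4) / t^2"
    using assms by (simp add: forall_2 mult2 mat1_2 field_simps eval_nat_numeral)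
  then show ?thesis by blast
qed


lemma commutant:
  fixes W P :: "complex^2^2"
  assumes tr: "W$1$1 + W$2$2 = 0" and dW: "W$1$1*W$2$2 - W$1$2*W$2$1 = 0"
    and comm: "P**W = W**P" and W0: "W \<noteq> 0"
  shows "\<exists>\<alpha> \<beta>. P = cscale \<alpha> (mat 1) + cscale \<beta> W"
proof -
  have c: "P$1$1*W$1$1 + P$1$2*W$2$1 = W$1$1*P$1$1 + W$1$2*P$2$1"
          "P$1$1*W$1$2 + P$1$2*W$2$2 = W$1$1*P$1$2 + W$1$2*P$2$2"
          "P$2$1*W$1$1 + P$2$2*W$2$1 = W$2$1*P$1$1 + W$2$2*P$2$1"
          "P$2$1*W$1$2 + P$2$2*W$2$2 = W$2$1*P$1$2 + W$2$2*P$2$2"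
    using comm unfolding mat2_eq mult2 by auto
  have w22: "W$2$2 = - W$1$1" using tr by (simp add: add_eq_0_iff)
  have sq: "W$1$1 * W$1$1 = - (W$1$2*W$2$1)" using dW unfolding w22 by (simp add: algebra_simps) (metis minus_equation_iff)
  show ?thesis
  proof (cases "W$1$2 = 0")
    case False
    define \<beta> where "\<beta> = P$1$2 / W$1$2"
    define \<alpha> where "\<alpha> = P$2$2 + \<beta> * W$1$1"
    have "P$2$1 = \<beta> * W$2$1" using c(1) False unfolding \<beta>_def by (simp add: field_simps)
    moreover have "P$1$1 = \<alpha> + \<beta> * W$1$1" using c(2) False w22 unfolding \<alpha>_def \<beta>_def
      by (simp add: field_simps)
    moreover have "P$1$2 = \<beta> * W$1$2" using False unfolding \<beta>_def by simp
    moreover have "P$2$2 = \<alpha> + \<beta> * W$2$2" unfolding \<alpha>_def using w22 by simp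
    ultimately have "P = cscale \<alpha> (mat 1) + cscale \<beta> W" unfolding mat2_eq by (simp add: mat1_2)
    then show ?thesis by blast
  next
    case True
    then have w11: "W$1$1 = 0" using sq by simp
    have w21: "W$2$1 \<noteq> 0" using W0 True w11 w22 unfolding mat2_eq by auto
    define \<beta> where "\<beta> = P$2$1 / W$2$1"
    define \<alpha> where "\<alpha> = P$2$2"
    have "P$1$2 = 0" using c(1) True w21 by simp
    moreover have "P$1$1 = P$2$2" using c(3) w11 w22 w21 by simp
    moreover have "P$2$1 = \<beta> * W$2$1" using w21 unfolding \<beta>_def by simp
    ultimately have "P = cscale \<alpha> (mat 1) + cscale \<beta> W" unfolding mat2_eq \<alpha>_def
      using True w11 w22 by (simp add: mat1_2)
    then show ?thesis by blast
  qed
qed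

lemma final_alg:
  fixes W P Y Z :: "complex^2^2" and c e :: complex
  assumes tr: "W$1$1 + W$2$2 = 0" and dW: "W$1$1*W$2$2 - W$1$2*W$2$1 = 0"
    and c1: "c * (1 + W$1$1*Y$2$2 + W$2$2*Y$1$1 - W$1$2*Y$2$1 - W$2$1*Y$1$2) = 1"
    and e1: "e * (1 + (-W)$1$1*Z$2$2 + (-W)$2$2*Z$1$1 - (-W)$1$2*Z$2$1 - (-W)$2$1*Z$1$2) = 1"
    and dP: "det P = e * c"
    and comm: "(-W)**P + P**W = 0"
    and A2: "(-W)**P**Y + P + Z**P**W = mat 1"
  shows "\<exists>d. P = cscale c (mat 1) + cscale d W"
proof -
  have "((-W)**P + P**W)$i$j = 0" for i j using comm by simp
  then have "(P**W)$i$j = (W**P)$i$j" for i j by (simp add: mult2 algebra_simps)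
  then have comm': "P**W = W**P" by (simp add: vec_eq_iff)
  have "\<exists>\<alpha> \<beta>. P = cscale \<alpha> (mat 1) + cscale \<beta> W"
  proof (cases "W = 0")
    case True
    then have "P = mat 1" using A2 by simp
    then have "P = cscale 1 (mat 1) + cscale 0 W" unfolding mat2_eq by (simp add: mat1_2)
    then show ?thesis by blast
  next
    case False
    then show ?thesis using commutant[OF tr dW comm'] by blast
  qed
  then obtain \<alpha> \<beta> where Pab: "P = cscale \<alpha> (mat 1) + cscale \<beta> W" by blast
  define s1 where "s1 = W$1$1*Y$2$2 + W$2$2*Y$1$1 - W$1$2*Y$2$1 - W$2$1*Y$1$2"
  define s2 where "s2 = (-W$1$1)*Z$2$2 + (-W$2$2)*Z$1$1 - (-W$1$2)*Z$2$1 - (-W$2$1)*Z$1$2"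
  have a11: "((-W)**P**Y + P + Z**P**W)$1$1 = 1" using A2 by (simp add: mat1_2)
  have a22: "((-W)**P**Y + P + Z**P**W)$2$2 = 1" using A2 by (simp add: mat1_2)
  have T: "\<alpha> * (1 + s1) + \<alpha> * (1 + s2) = 2"
    using a11 a22 tr dW unfolding Pab s1_def s2_def by (simp add: mult2 mat1_2) algebra
  have D: "\<alpha> * \<alpha> = e * c"
    using dP tr dW unfolding Pab by (simp add: det_2 mat1_2) algebra
  have c1': "c * (1 + s1) = 1" using c1 unfolding s1_def by (simp add: algebra_simps)
  have e1': "e * (1 + s2) = 1" using e1 unfolding s2_def by (simp add: algebra_simps)
  define u where "u = \<alpha> * (1 + s1)"
  define v where "v = \<alpha> * (1 + s2)"
  have "u * v = (\<alpha>*\<alpha>)*((1+s1)*(1+s2))" unfolding u_def v_def by (simp add: mult_ac)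
  also have "\<dots> = (c*(1+s1))*(e*(1+s2))" unfolding D by (simp add: mult_ac)
  also have "\<dots> = 1" using c1' e1' by simp
  finally have uv: "u * v = 1" .
  have "u + v = 2" using T u_def v_def by simp
  then have "v = 2 - u" by (simp add: eq_diff_eq add.commute)
  then have "u * (2 - u) = 1" using uv by simp
  then have "(u - 1) * (u - 1) = 0" by algebra
  then have "u = 1" by simp
  have nz: "1 + s1 \<noteq> 0" using c1' by auto
  have "\<alpha> * (1+s1) = c * (1+s1)" using \<open>u = 1\<close> c1' unfolding u_def by simp
  then have "\<alpha> = c" using nz by simp
  then show ?thesis using Pab by blast
qed

lemma Zp_sep:
  assumes "x \<in> Zp" "y \<in> Zp" "x \<noteq> y" shows "1 \<le> \<bar>x - y\<bar>"
proof -
  obtain k m :: int where k: "x = of_int k + 1/2" and m: "y = of_int m + 1/2"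
    using assms(1,2) by (auto simp: Zp_def)
  have "k \<noteq> m" using assms(3) k m by auto
  then have "1 \<le> \<bar>k - m\<bar>" by linarith
  then have "1 \<le> \<bar>real_of_int (k - m)\<bar>" by linarith
  then show ?thesis using k m by simp
qed

lemma Zp_not_nat:
  assumes "x \<in> Zp" shows "\<bar>x\<bar> \<noteq> real n"
proof
  assume h: "\<bar>x\<bar> = real n"
  obtain k :: int where k: "x = of_int k + 1/2" using assms by (auto simp: Zp_def)
  have "real_of_int (2*k+1) = real_of_int (2 * int n) \<or> real_of_int (2*k+1) = real_of_int (- 2 * int n)"
    using h k by (auto simp: abs_if split: if_splits)
  then have "2*k+1 = 2 * int n \<or> 2*k+1 = - 2 * int n" by (simp only: of_int_eq_iff)
  then show False by presburger
qed

lemma Zp_finite: "finite {x \<in> Zp. \<bar>x\<bar> \<le> R}"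
proof -
  have "{x \<in> Zp. \<bar>x\<bar> \<le> R} \<subseteq> (\<lambda>k. of_int k + 1/2) ` {-\<lceil>R\<rceil>-1 .. \<lceil>R\<rceil>}"
  proof
    fix x assume "x \<in> {x \<in> Zp. \<bar>x\<bar> \<le> R}"
    then obtain k :: int where k: "x = of_int k + 1/2" and "\<bar>x\<bar> \<le> R" by (auto simp: Zp_def)
    then have "-R - 1 \<le> of_int k" "of_int k \<le> R" by auto
    moreover have "R \<le> of_int \<lceil>R\<rceil>" by (rule le_of_int_ceiling)
    ultimately have "real_of_int (-\<lceil>R\<rceil>-1) \<le> real_of_int k" "real_of_int k \<le> real_of_int \<lceil>R\<rceil>"
      unfolding of_int_diff of_int_minus of_int_1 by linarith+
    then have "-\<lceil>R\<rceil>-1 \<le> k" "k \<le> \<lceil>R\<rceil>" by (simp_all only: of_int_le_iff)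
    then show "x \<in> (\<lambda>k. of_int k + 1/2) ` {-\<lceil>R\<rceil>-1 .. \<lceil>R\<rceil>}" using k by auto
  qed
  then show ?thesis by (rule finite_subset) simp
qed

definition Zc :: "complex set" where "Zc = complex_of_real ` Zp"

lemma Zc_finite: "finite (Zc \<inter> cball 0 R)"
proof -
  have "Zc \<inter> cball 0 R \<subseteq> complex_of_real ` {x \<in> Zp. \<bar>x\<bar> \<le> R}"
    by (auto simp: Zc_def)
  then show ?thesis using Zp_finite finite_subset by blast
qed

lemma Zc_isolated:
  assumes "b \<in> Zp" shows "eventually (\<lambda>z. z \<notin> Zc) (at (complex_of_real b))"
proof -
  have *: "z \<notin> Zc" if h: "z \<noteq> complex_of_real b" "dist z (complex_of_real b) < 1/2" for z
  proof
    assume "z \<in> Zc"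
    then obtain x where x: "x \<in> Zp" "z = complex_of_real x" by (auto simp: Zc_def)
    then have "x \<noteq> b" "\<bar>x - b\<bar> < 1/2" using h by (auto simp: dist_norm simp flip: of_real_diff)
    then show False using Zp_sep[OF x(1) assms] by linarith
  qed
  show ?thesis unfolding eventually_at
    by (rule exI[of _ "1/2"]) (use * in auto)
qed

lemma sphere_Zc: "sphere 0 (real n) \<inter> Zc = {}"
  using Zp_not_nat by (auto simp: Zc_def)

lemma det_near1:
  fixes A :: "complex^2^2"
  shows "norm (det A - 1) \<le> 2 * norm (A - mat 1) + 2 * norm (A - mat 1)^2"
proof -
  define N where "N = norm (A - mat 1)"
  have e: "norm ((A - mat 1)$i$j) \<le> N" for i j
    unfolding N_def using Finite_Cartesian_Product.norm_nth_le[of "(A - mat 1) $ i" j]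
      Finite_Cartesian_Product.norm_nth_le[of "A - mat 1" i] by linarith
  define e11 where "e11 = A$1$1 - 1"
  define e22 where "e22 = A$2$2 - 1"
  have e11: "norm e11 \<le> N" using e[of 1 1] by (simp add: e11_def mat1_2)
  have e22: "norm e22 \<le> N" using e[of 2 2] by (simp add: e22_def mat1_2)
  have e12: "norm (A$1$2) \<le> N" using e[of 1 2] by (simp add: mat1_2)
  have e21: "norm (A$2$1) \<le> N" using e[of 2 1] by (simp add: mat1_2)
  have "det A - 1 = e11 + e22 + e11 * e22 - A$1$2 * A$2$1"
    by (simp add: det_2 e11_def e22_def algebra_simps)
  also have "norm \<dots> \<le> norm e11 + norm e22 + norm e11 * norm e22 + norm (A$1$2) * norm (A$2$1)"
    using norm_triangle_ineq4[of "e11 + e22 + e11 * e22" "A$1$2 * A$2$1"]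
      norm_triangle_ineq[of "e11 + e22" "e11 * e22"] norm_triangle_ineq[of e11 e22]
    by (simp add: norm_mult)
  also have "\<dots> \<le> N + N + N * N + N * N"
    by (intro add_mono mult_mono e11 e22 e12 e21) (auto simp: N_def)
  finally show ?thesis by (simp add: N_def power2_eq_square)
qed


lemma WY_nth: "WY \<sigma> L s b $i$j = fvec \<sigma> L s b $i * gvec \<sigma> L s b $j / complex_of_real (1 - Ms \<sigma> L s b)"
  by (simp add: WY_def)

lemma fg0: "fvec \<sigma> L s b $1 * gvec \<sigma> L s b $1 + fvec \<sigma> L s b $2 * gvec \<sigma> L s b $2 = 0"
  by (simp add: fvec_def gvec_def vector_2 algebra_simps)

lemma W_tr: "WY \<sigma> L s b $1$1 + WY \<sigma> L s b $2$2 = 0"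
proof -
  have "WY \<sigma> L s b $1$1 + WY \<sigma> L s b $2$2 =
     (fvec \<sigma> L s b $1 * gvec \<sigma> L s b $1 + fvec \<sigma> L s b $2 * gvec \<sigma> L s b $2) / complex_of_real (1 - Ms \<sigma> L s b)"
    by (simp add: WY_nth add_divide_distrib)
  then show ?thesis using fg0 by simp
qed

lemma W_det: "WY \<sigma> L s b $1$1 * WY \<sigma> L s b $2$2 - WY \<sigma> L s b $1$2 * WY \<sigma> L s b $2$1 = 0"
  by (simp add: WY_nth)

lemma detIW_gen:
  fixes W :: "complex^2^2"
  assumes "W$1$1 + W$2$2 = 0" "W$1$1 * W$2$2 - W$1$2 * W$2$1 = 0"
  shows "det (mat 1 - cscale x W) = 1"
proof -
  have "det (mat 1 - cscale x W) = 1 - x * (W$1$1 + W$2$2) + x^2 * (W$1$1 * W$2$2 - W$1$2 * W$2$1)"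
    by (simp add: det_2 mat1_2 algebra_simps power2_eq_square)
  then show ?thesis using assms by simp
qed

lemma detIW: "det (mat 1 - cscale x (WY \<sigma> L s b)) = 1"
  by (rule detIW_gen[OF W_tr W_det])

lemma det_Y_one:
  assumes Y: "dRHP \<sigma> L s Y" and z: "z \<notin> Zc"
  shows "det (Y z) = 1"
proof -
  have H: "\<And>i j. (\<lambda>z. Y z $i$j) holomorphic_on (-Zc)"
    using Y by (auto simp: dRHP_def Zc_def)
  have R3: "\<And>x i j. x \<in> Zp \<Longrightarrow> \<exists>c. ((\<lambda>z. (Y z ** (mat 1 - cscale (1 / (z - complex_of_real x)) (WY \<sigma> L s x))) $ i $ j)
                          \<longlongrightarrow> c) (at (complex_of_real x))"
    using Y by (auto simp: dRHP_def)
  have S: "(\<lambda>n::nat. SUP z\<in>sphere 0 (real n). norm (Y z - mat 1)) \<longlonglongrightarrow> 0"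
    using Y by (auto simp: dRHP_def)
  have Hd: "(\<lambda>z. det (Y z)) holomorphic_on (-Zc)"
    unfolding det_2 by (intro holomorphic_intros H)
  have lim: "\<exists>l. ((\<lambda>z. det (Y z)) \<longlongrightarrow> l) (at b)" if b: "b \<in> Zc" for b
  proof -
    obtain x where x: "x \<in> Zp" "b = complex_of_real x" using b by (auto simp: Zc_def)
    define Q where "Q = (\<lambda>z. Y z ** (mat 1 - cscale (1 / (z - complex_of_real x)) (WY \<sigma> L s x)))"
    obtain c11 where c11: "((\<lambda>z. Q z $1$1) \<longlongrightarrow> c11) (at b)" using R3[OF x(1), of 1 1] unfolding Q_def x(2) by blast
    obtain c12 where c12: "((\<lambda>z. Q z $1$2) \<longlongrightarrow> c12) (at b)" using R3[OF x(1), of 1 2] unfolding Q_def x(2) by blast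
    obtain c21 where c21: "((\<lambda>z. Q z $2$1) \<longlongrightarrow> c21) (at b)" using R3[OF x(1), of 2 1] unfolding Q_def x(2) by blast
    obtain c22 where c22: "((\<lambda>z. Q z $2$2) \<longlongrightarrow> c22) (at b)" using R3[OF x(1), of 2 2] unfolding Q_def x(2) by blast
    have "((\<lambda>z. Q z $1$1 * Q z $2$2 - Q z $1$2 * Q z $2$1) \<longlongrightarrow> c11 * c22 - c12 * c21) (at b)"
      by (intro tendsto_intros c11 c12 c21 c22)
    moreover have "Q z $1$1 * Q z $2$2 - Q z $1$2 * Q z $2$1 = det (Y z)" for z
      unfolding det_2[symmetric] Q_def det_mul detIW by simp
    ultimately show ?thesis by auto
  qed
  define h where "h w = (if w \<in> Zc then Lim (at w) (\<lambda>z. det (Y z)) else det (Y w))" for w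
  have hcont: "(h \<longlongrightarrow> h w) (at w)" if w: "w \<in> Zc" for w
  proof -
    obtain l where l: "((\<lambda>z. det (Y z)) \<longlongrightarrow> l) (at w)" using lim w by blast
    have hw: "h w = l" using tendsto_Lim[OF at_neq_bot l] w by (simp add: h_def)
    obtain x where x: "x \<in> Zp" "w = complex_of_real x" using w by (auto simp: Zc_def)
    have ev: "eventually (\<lambda>z. z \<notin> Zc) (at w)" using Zc_isolated[OF x(1)] x(2) by simp
    have "eventually (\<lambda>z. det (Y z) = h z) (at w)" using ev by eventually_elim (simp add: h_def)
    then show ?thesis using l hw Lim_transform_eventually by fastforce
  qed
  have hhol: "h holomorphic_on ball 0 r" for r
  proof (rule no_isolated_singularity'[where K = "Zc \<inter> cball 0 r"])
    show "\<And>w. w \<in> Zc \<inter> cball 0 r \<Longrightarrow> (h \<longlongrightarrow> h w) (at w within ball 0 r)"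
      using hcont Lim_at_imp_Lim_at_within by blast
    show "h holomorphic_on (ball 0 r - Zc \<inter> cball 0 r)"
      by (rule holomorphic_transform[OF holomorphic_on_subset[OF Hd]]) (auto simp: h_def)
    show "open (ball (0::complex) r)" by simp
    show "finite (Zc \<inter> cball 0 r)" by (rule Zc_finite)
  qed
  define Bn where "Bn = (\<lambda>n::nat. SUP w\<in>sphere 0 (real n). norm (Y w - mat 1))"
  have BnS: "Bn \<longlonglongrightarrow> 0" using S unfolding Bn_def .
  have Ycont: "continuous_on (-Zc) Y"
  proof -
    have "continuous_on (-Zc) (\<lambda>z. \<chi> i j. Y z $i$j)"
      by (intro continuous_on_vec_lambda holomorphic_on_imp_continuous_on H)
    then show ?thesis by simp
  qed
  have bnd: "norm (h w - 1) \<le> 2 * Bn n + 2 * (Bn n)^2" if w: "w \<in> sphere 0 (real n)" for w n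
  proof -
    have wZ: "w \<notin> Zc" using sphere_Zc w by blast
    have "sphere 0 (real n) \<subseteq> -Zc" using sphere_Zc by blast
    then have "continuous_on (sphere 0 (real n)) (\<lambda>z. norm (Y z - mat 1))"
      by (intro continuous_intros continuous_on_subset[OF Ycont])
    then have "bounded ((\<lambda>z. norm (Y z - mat 1)) ` sphere 0 (real n))"
      by (intro compact_imp_bounded compact_continuous_image) auto
    then have "bdd_above ((\<lambda>z. norm (Y z - mat 1)) ` sphere 0 (real n))"
      by (rule bounded_imp_bdd_above)
    then have le: "norm (Y w - mat 1) \<le> Bn n" unfolding Bn_def using w by (intro cSUP_upper)
    have "(norm (Y w - mat 1))^2 \<le> (Bn n)^2" by (intro power_mono le) simp
    then show ?thesis using det_near1[of "Y w"] wZ le by (simp add: h_def)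
  qed
  obtain N0 :: nat where N0: "norm z < real N0" using reals_Archimedean2 by blast
  have "norm (h z - 1) \<le> 2 * Bn n + 2 * (Bn n)^2" if n: "n \<ge> N0" for n
  proof -
    have npos: "0 < real n" using N0 n by (smt (verit) norm_ge_zero of_nat_mono)
    have zin: "z \<in> ball 0 (real n)" using N0 n by (smt (verit) mem_ball_0 of_nat_mono)
    have hol1: "h holomorphic_on ball 0 (real n + 1)" by (rule hhol)
    show ?thesis
    proof (rule maximum_modulus_frontier[of "\<lambda>w. h w - 1" "ball 0 (real n)"])
      show "(\<lambda>w. h w - 1) holomorphic_on interior (ball 0 (real n))"
        using hhol[of "real n"] by (intro holomorphic_intros) auto
      have "continuous_on (ball 0 (real n + 1)) (\<lambda>w. h w - 1)"
        by (intro continuous_intros holomorphic_on_imp_continuous_on hol1)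
      then show "continuous_on (closure (ball 0 (real n))) (\<lambda>w. h w - 1)"
        by (rule continuous_on_subset) (use npos in auto)
      show "bounded (ball (0::complex) (real n))" by simp
      show "\<And>w. w \<in> frontier (ball 0 (real n)) \<Longrightarrow> norm (h w - 1) \<le> 2 * Bn n + 2 * (Bn n)^2"
        using bnd npos by auto
      show "z \<in> ball 0 (real n)" by (rule zin)
    qed
  qed
  moreover have "(\<lambda>n. 2 * Bn n + 2 * (Bn n)^2) \<longlonglongrightarrow> 2 * 0 + 2 * 0^2"
    by (intro tendsto_intros BnS)
  ultimately have "norm (h z - 1) \<le> 0"
    using LIMSEQ_le_const[of "\<lambda>n. 2 * Bn n + 2 * (Bn n)^2" 0 "norm (h z - 1)"] by auto
  then show ?thesis using z by (simp add: h_def)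
qed


lemma lhs_alg:
  fixes f1 f2 g1 g2 D y11 y12 y21 y22 :: complex
  assumes fg: "f1*g1 + f2*g2 = 0"
  shows "(g1*(y11*f1 + y12*f2) + g2*(y21*f1 + y22*f2))/D =
    - ((f1*g1/D)*y22 + (f2*g2/D)*y11 - (f1*g2/D)*y21 - (f2*g1/D)*y12)"
proof (cases "D = 0")
  case True then show ?thesis by simp
next
  case False
  have "g1*(y11*f1 + y12*f2) + g2*(y21*f1 + y22*f2) =
    - ((f1*g1)*y22 + (f2*g2)*y11 - (f1*g2)*y21 - (f2*g1)*y12) + (f1*g1 + f2*g2)*(y11+y22)"
    by (simp add: algebra_simps)
  then have "g1*(y11*f1 + y12*f2) + g2*(y21*f1 + y22*f2) =
    - ((f1*g1)*y22 + (f2*g2)*y11 - (f1*g2)*y21 - (f2*g1)*y12)" by (simp only: fg mult_zero_left add_0_right)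
  moreover have "- ((f1*g1/D)*y22 + (f2*g2/D)*y11 - (f1*g2/D)*y21 - (f2*g1/D)*y12) =
     - ((f1*g1)*y22 + (f2*g2)*y11 - (f1*g2)*y21 - (f2*g1)*y12) / D"
    by (simp add: add_divide_distrib diff_divide_distrib times_divide_eq_left)
  ultimately show ?thesis by simp
qed

lemma coeff_from:
  fixes f :: "complex \<Rightarrow> complex"
  assumes lim: "(f \<longlongrightarrow> r) (at 0)"
    and eq: "\<And>t. t \<noteq> 0 \<Longrightarrow> f t = k * ((p0 + p1*t + p2*t^2 + p3*t^3 + p4*t^4) / t^2)"
  shows "k*p0 = 0 \<and> k*p1 = 0 \<and> k*p2 = r"
proof -
  have "eventually (\<lambda>t. f t = (k*p0 + (k*p1)*t + (k*p2)*t^2 + (k*p3)*t^3 + (k*p4)*t^4) / t^2) (at 0)"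
    using ev_nz by eventually_elim (simp add: eq times_divide_eq_right distrib_left mult.assoc)
  then have "((\<lambda>t. (k*p0 + (k*p1)*t + (k*p2)*t^2 + (k*p3)*t^3 + (k*p4)*t^4) / t^2) \<longlongrightarrow> r) (at 0)"
    using lim Lim_transform_eventually by fastforce
  then show ?thesis by (rule coeff_lemma)
qed

lemma coeff_from_r:
  fixes f :: "complex \<Rightarrow> complex"
  assumes lim: "(f \<longlongrightarrow> r) (at 0)"
    and eq: "\<And>t. t \<noteq> 0 \<Longrightarrow> f t = ((p0 + p1*t + p2*t^2 + p3*t^3 + p4*t^4) / t^2) * k"
  shows "k*p0 = 0 \<and> k*p1 = 0 \<and> k*p2 = r"
  by (rule coeff_from[OF lim, where ?p3.0=p3 and ?p4.0=p4]) (simp add: eq mult.commute)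

lemma minv_left:
  fixes X :: "'a::field^'n^'n"
  assumes "invertible X" shows "matrix_inv X ** X = mat 1"
  using assms unfolding matrix_inv_def invertible_def by (rule someI2_ex) auto

lemma neg_cscale: "- cscale x W = cscale x (-W)"
  by (simp add: vec_eq_iff)

theorem lemma3p3:
  fixes \<sigma> :: "real \<Rightarrow> real" and L s a :: real
    and Y :: "complex \<Rightarrow> complex^2^2"
    and C Y1 Ct Yt1 :: "complex^2^2"
  assumes L: "L > 0"
    and sigma_range: "\<forall>l\<in>Zp. 0 \<le> \<sigma> l \<and> \<sigma> l \<le> 1"
    and sigma_neg: "\<sigma> summable_on {l\<in>Zp. l < 0}"
    and s: "s \<in> Zp"
    and Q: "Qsigma \<sigma> L s > 0"
    and Y: "dRHP \<sigma> L s Y"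
    and a: "a \<in> Zp"
    and C_inv: "invertible C"
    and Y_exp: "\<exists>B. \<forall>\<^sub>F z in at (complex_of_real a).
        norm (Y z - C ** (cscale (1 / (z - complex_of_real a)) (WY \<sigma> L s a) + mat 1
                          + cscale (z - complex_of_real a) Y1))
          \<le> B * norm (z - complex_of_real a)^2"
    and Ct_inv: "invertible Ct"
    and Yinv_exp: "\<exists>B. \<forall>\<^sub>F z in at (complex_of_real a).
        norm (matrix_inv (Y z) - (- cscale (1 / (z - complex_of_real a)) (WY \<sigma> L s a) + mat 1
                          + cscale (z - complex_of_real a) Yt1) ** Ct)
          \<le> B * norm (z - complex_of_real a)^2"
  shows "(\<Sum>i\<in>UNIV. (gvec \<sigma> L s a)$i * (Y1 *v fvec \<sigma> L s a)$i) / complex_of_real (1 - Ms \<sigma> L s a)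
           = (det C - 1) / det C \<and>
         (\<exists>d::complex. Ct ** C = cscale (det C) (mat 1) + cscale d (WY \<sigma> L s a))"
proof -
  define A where "A = complex_of_real a"
  define W where "W = WY \<sigma> L s a"
  have trW: "W$1$1 + W$2$2 = 0" unfolding W_def by (rule W_tr)
  have dW: "W$1$1*W$2$2 - W$1$2*W$2$1 = 0" unfolding W_def by (rule W_det)
  have nZ: "eventually (\<lambda>z. z \<notin> Zc) (at A)" using Zc_isolated[OF a] A_def by simp
  have d1A: "eventually (\<lambda>z. det (Y z) = 1) (at A)"
    using nZ by eventually_elim (rule det_Y_one[OF Y])
  have d1: "eventually (\<lambda>t. det (Y (t + A)) = 1) (at 0)"
    using d1A by (subst (asm) eventually_at_to_0) simp
  define M where "M = (\<lambda>t. cscale (1/t) W + mat 1 + cscale t Y1)"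
  define M' where "M' = (\<lambda>t. cscale (1/t) (-W) + mat 1 + cscale t Yt1)"
  obtain B where B: "eventually (\<lambda>z. norm (Y z - C ** (cscale (1 / (z - A)) W + mat 1
                          + cscale (z - A) Y1)) \<le> B * norm (z - A)^2) (at A)"
    using Y_exp unfolding A_def W_def by blast
  have B0: "eventually (\<lambda>t. norm (Y (t + A) - C ** M t) \<le> B * norm t^2) (at 0)"
    using B by (subst (asm) eventually_at_to_0) (simp add: M_def)
  obtain B' where B': "eventually (\<lambda>z. norm (matrix_inv (Y z) - (- cscale (1 / (z - A)) W + mat 1
                          + cscale (z - A) Yt1) ** Ct) \<le> B' * norm (z - A)^2) (at A)"
    using Yinv_exp unfolding A_def W_def by blast
  have B0': "eventually (\<lambda>t. norm (matrix_inv (Y (t + A)) - M' t ** Ct) \<le> B' * norm t^2) (at 0)"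
    using B' by (subst (asm) eventually_at_to_0) (simp add: M'_def neg_cscale)
  have "((\<lambda>t. det (C ** M t)) \<longlongrightarrow> 1) (at 0)"
    by (rule det_limit_generic[OF d1 B0]) (unfold M_def, rule tlim_left)
  then have "det C * (W$1$1*W$2$2 - W$1$2*W$2$1) = 0 \<and> det C * (W$1$1 + W$2$2) = 0 \<and>
     det C * (1 + W$1$1*Y1$2$2 + W$2$2*Y1$1$1 - W$1$2*Y1$2$1 - W$2$1*Y1$1$2) = 1"
    by (rule coeff_from[where ?p3.0="Y1$1$1 + Y1$2$2" and ?p4.0="Y1$1$1*Y1$2$2 - Y1$1$2*Y1$2$1"])
      (simp add: M_def det_mul detM)
  then have c1: "det C * (1 + W$1$1*Y1$2$2 + W$2$2*Y1$1$1 - W$1$2*Y1$2$1 - W$2$1*Y1$1$2) = 1" by blast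
  define s1 where "s1 = W$1$1*Y1$2$2 + W$2$2*Y1$1$1 - W$1$2*Y1$2$1 - W$2$1*Y1$1$2"
  have cnz: "det C \<noteq> 0" using c1 by auto
  have c1': "det C * (1 + s1) = 1" using c1 unfolding s1_def by (simp add: algebra_simps)
  have rhs: "(det C - 1) / det C = - s1"
    using c1' cnz by (simp add: field_simps)
  have lhs: "(\<Sum>i\<in>UNIV. (gvec \<sigma> L s a)$i * (Y1 *v fvec \<sigma> L s a)$i) / complex_of_real (1 - Ms \<sigma> L s a) = - s1"
  proof -
    define f1 where "f1 = fvec \<sigma> L s a $ 1"
    define f2 where "f2 = fvec \<sigma> L s a $ 2"
    define g1 where "g1 = gvec \<sigma> L s a $ 1"
    define g2 where "g2 = gvec \<sigma> L s a $ 2"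
    define D where "D = complex_of_real (1 - Ms \<sigma> L s a)"
    have e1: "(\<Sum>i\<in>UNIV. (gvec \<sigma> L s a)$i * (Y1 *v fvec \<sigma> L s a)$i) / complex_of_real (1 - Ms \<sigma> L s a)
       = (g1*(Y1$1$1*f1 + Y1$1$2*f2) + g2*(Y1$2$1*f1 + Y1$2$2*f2))/D"
      by (simp add: sum_2 matrix_vector_mult_def f1_def f2_def g1_def g2_def D_def)
    have e2: "s1 = (f1*g1/D)*Y1$2$2 + (f2*g2/D)*Y1$1$1 - (f1*g2/D)*Y1$2$1 - (f2*g1/D)*Y1$1$2"
      by (simp add: s1_def W_def WY_nth f1_def f2_def g1_def g2_def D_def)
    have fg: "f1*g1 + f2*g2 = 0" unfolding f1_def f2_def g1_def g2_def by (rule fg0)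
    show ?thesis unfolding e1 e2 by (rule lhs_alg[OF fg])
  qed
  have part1: "(\<Sum>i\<in>UNIV. (gvec \<sigma> L s a)$i * (Y1 *v fvec \<sigma> L s a)$i) / complex_of_real (1 - Ms \<sigma> L s a)
           = (det C - 1) / det C" using lhs rhs by simp
  define V where "V = (\<lambda>t. matrix_inv (Y (t + A)))"
  have B0V: "eventually (\<lambda>t. norm (V t - M' t ** Ct) \<le> B' * norm t^2) (at 0)"
    using B0' by (simp add: V_def)
  have VY: "eventually (\<lambda>t. V t ** Y (t + A) = mat 1) (at 0)"
    using d1 by eventually_elim (simp add: V_def minv_left invertible_det_nz)
  have dV: "eventually (\<lambda>t. det (V t) = 1) (at 0)"
    using VY d1 
  proof eventually_elim
    case (elim t)
    then have "det (V t) * det (Y (t + A)) = 1" by (metis det_I det_mul)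
    then show ?case using elim by simp
  qed
  have "((\<lambda>t. det (M' t ** Ct)) \<longlongrightarrow> 1) (at 0)"
    by (rule det_limit_generic[OF dV B0V]) (unfold M'_def, rule tlim_right)
  then have "det Ct * ((-W)$1$1*(-W)$2$2 - (-W)$1$2*(-W)$2$1) = 0 \<and> det Ct * ((-W)$1$1 + (-W)$2$2) = 0 \<and>
     det Ct * (1 + (-W)$1$1*Yt1$2$2 + (-W)$2$2*Yt1$1$1 - (-W)$1$2*Yt1$2$1 - (-W)$2$1*Yt1$1$2) = 1"
    by (rule coeff_from_r[where ?p3.0="Yt1$1$1 + Yt1$2$2" and ?p4.0="Yt1$1$1*Yt1$2$2 - Yt1$1$2*Yt1$2$1"])
      (simp add: M'_def det_mul detM[of _ "-W"])
  then have e1: "det Ct * (1 + (-W)$1$1*Yt1$2$2 + (-W)$2$2*Yt1$1$1 - (-W)$1$2*Yt1$2$1 - (-W)$2$1*Yt1$1$2) = 1"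
    by blast
  define P where "P = Ct ** C"
  have coeffs: "1 * ((-W)**P**W)$i$j = 0 \<and> 1 * ((-W)**P + P**W)$i$j = 0 \<and>
      1 * ((-W)**P**Y1 + P + Yt1**P**W)$i$j = (mat 1::complex^2^2)$i$j" for i j
  proof (rule coeff_from)
    show "((\<lambda>t. ((M' t ** Ct) ** (C ** M t))$i$j) \<longlongrightarrow> (mat 1::complex^2^2)$i$j) (at 0)"
      by (rule prod_limit_generic[OF VY B0V B0]) (unfold M_def M'_def, rule tlim_left, rule tlim_right)
    fix t :: complex assume "t \<noteq> 0"
    then show "((M' t ** Ct) ** (C ** M t))$i$j = 1 * ((((-W)**P**W)$i$j + ((-W)**P + P**W)$i$j * t
       + ((-W)**P**Y1 + P + Yt1**P**W)$i$j * t^2 + (P**Y1 + Yt1**P)$i$j * t^3 + (Yt1**P**Y1)$i$j * t^4) / t^2)"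
      using prodM[of t "-W" Yt1 P W Y1 i j] by (simp add: M_def M'_def P_def matrix_mul_assoc)
  qed
  have comm: "(-W)**P + P**W = 0" using coeffs by (simp add: vec_eq_iff)
  have A2: "(-W)**P**Y1 + P + Yt1**P**W = mat 1" using coeffs by (simp add: vec_eq_iff)
  have dP: "det P = det Ct * det C" by (simp add: P_def det_mul)
  have part2: "\<exists>d. P = cscale (det C) (mat 1) + cscale d W"
    by (rule final_alg[OF trW dW c1 e1 dP comm A2])
  show ?thesis using part1 part2 unfolding P_def W_def by blast
qed

end
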